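(* Let $N\geq1$ and $\rho\in\{0,1/2,1,3/2,\ldots\}\cup[(N-1)/2,\infty)$. Then for every $n\geq1$ and every $A_{1},\ldots,A_{n}$ in the set of $N\times N$ real symmetric positive definite matrices, \[ \sum_{i=1}^{n}\det(A_{i})^{-\rho}-\sum_{1\leq i<j\leq n}\det(A_{i}+A_{j})^{-\rho}+\cdots+(-1)^{n-1}\det\Bigl(\sum_{i=1}^{n}A_{i}\Bigr)^{-\rho}\geq0, \] where the general term is $(-1)^{k-1}\sum_{1\le i_1<\cdots<i_k\le n}\det(A_{i_1}+\cdots+A_{i_k})^{-\rho}$. *)

theory Defs
  imports "HOL-Analysis.Analysis"
begin

definition sym_pos_def_mat :: "real^'n^'n \<Rightarrow> bool" where
  "sym_pos_def_mat A \<longleftrightarrow> transpose A = A \<and> (\<forall>x::real^'n. x \<noteq> 0 \<longrightarrow> x \<bullet> (A *v x) > 0)"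

end

theory Submission
  imports Defs "HOL-Probability.Distributions"
begin

definition detJ :: "'n::finite set \<Rightarrow> real^'n^'n \<Rightarrow> real" where
  "detJ J X = (\<Sum>p | p permutes J. of_int (sign p) * (\<Prod>i\<in>J. X$i$p i))"

definition padm :: "'n::finite set \<Rightarrow> real^'n^'n \<Rightarrow> real^'n^'n" where
  "padm J X = (\<chi> a b. if a \<in> J \<and> b \<in> J then X$a$b else if a = b then 1 else 0)"

definition schur :: "'n::finite \<Rightarrow> real^'n^'n \<Rightarrow> real^'n^'n" where
  "schur j X = (\<chi> a b. X$a$b - X$a$j * X$j$b / X$j$j)"

lemma detJ_pad:
  fixes X :: "real^'n::finite^'n"
  shows "detJ J X = det (padm J X)"
proof -
  have "det (padm J X) = (\<Sum>p | p permutes J. of_int (sign p) * (\<Prod>i\<in>UNIV. padm J X$i$p i))"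
    unfolding det_def
  proof (rule sum.mono_neutral_right)
    show "finite {p. p permutes (UNIV::'n set)}" by (simp add: finite_permutations)
    show "{p. p permutes J} \<subseteq> {p. p permutes (UNIV::'n set)}"
      using permutes_subset by blast
    show "\<forall>p\<in>{p. p permutes UNIV} - {p. p permutes J}.
        of_int (sign p) * (\<Prod>i\<in>UNIV. padm J X $ i $ p i) = 0"
    proof
      fix p assume p: "p \<in> {p. p permutes (UNIV::'n set)} - {p. p permutes J}"
      then have "\<exists>i. i \<notin> J \<and> p i \<noteq> i"
        unfolding permutes_def by auto
      then obtain i where i: "i \<notin> J" "p i \<noteq> i" by blast
      have "padm J X $ i $ p i = 0" using i by (simp add: padm_def)
      then have "(\<Prod>i\<in>UNIV. padm J X $ i $ p i) = 0"
        by (meson UNIV_I finite prod_zero_iff)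
      then show "of_int (sign p) * (\<Prod>i\<in>UNIV. padm J X $ i $ p i) = 0" by simp
    qed
  qed
  also have "\<dots> = detJ J X"
    unfolding detJ_def
  proof (rule sum.cong[OF refl])
    fix p assume "p \<in> {p. p permutes J}"
    then have p: "p permutes J" by simp
    have "(\<Prod>i\<in>UNIV. padm J X$i$p i) = (\<Prod>i\<in>J. padm J X$i$p i)"
    proof (rule prod.mono_neutral_right)
      show "\<forall>i\<in>UNIV - J. padm J X $ i $ p i = 1"
        using p by (auto simp: padm_def permutes_not_in)
    qed auto
    also have "\<dots> = (\<Prod>i\<in>J. X$i$p i)"
      using p by (intro prod.cong) (auto simp: padm_def permutes_in_image)
    finally show "of_int (sign p) * (\<Prod>i\<in>UNIV. padm J X $ i $ p i) = of_int (sign p) * (\<Prod>i\<in>J. X$i$p i)"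
      by simp
  qed
  finally show ?thesis ..
qed

lemma det_rows_op:
  fixes A :: "real^'n::finite^'n"
  assumes "j \<notin> R"
  shows "det (\<chi> a. if a \<in> R then row a A + c a *s row j A else row a A) = det A"
proof -
  have "finite R" by simp
  then show ?thesis using assms
  proof (induction R rule: finite_induct)
    case empty
    then show ?case by (simp add: row_def vec_lambda_eta)
  next
    case (insert r R)
    let ?M = "(\<chi> a. if a \<in> R then row a A + c a *s row j A else row a A) :: real^'n^'n"
    have rj: "r \<noteq> j" using insert by auto
    have eq: "(\<chi> a. if a \<in> insert r R then row a A + c a *s row j A else row a A)
        = (\<chi> k. if k = r then row r ?M + c r *s row j ?M else row k ?M)"
      using insert by (auto simp: vec_eq_iff row_def)
    show ?case unfolding eq det_row_operation[OF rj] using insert by simp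
  qed
qed

lemma detJ_schur:
  fixes X :: "real^'n::finite^'n"
  assumes j: "j \<in> J" and d: "X$j$j \<noteq> 0"
  shows "detJ J X = X$j$j * detJ (J - {j}) (schur j X)"
proof -
  define P where "P = padm J X"
  define Q where "Q = padm (J - {j}) (schur j X)"
  define M1 where "M1 = (\<chi> a. if a \<in> J - {j} then row a P + (- (X$a$j / X$j$j)) *s row j P else row a P)"
  have dM1: "det M1 = det P" unfolding M1_def by (rule det_rows_op) simp
  define T2 where "T2 = (\<chi> b. if b \<in> J - {j} then row b (transpose M1) + (- (X$j$b / X$j$j)) *s row j (transpose M1) else row b (transpose M1))"
  have dT2: "det T2 = det M1" unfolding T2_def by (subst det_rows_op) simp_all
  have M1e: "M1$a$b = (if a \<in> J - {j} then P$a$b - X$a$j / X$j$j * P$j$b else P$a$b)" for a b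
    by (simp add: M1_def row_def)
  have T2e: "T2$b$a = (if b \<in> J - {j} then M1$a$b - X$j$b / X$j$j * M1$a$j else M1$a$b)" for a b
    by (simp add: T2_def row_def transpose_def)
  have Pe: "P$a$b = (if a \<in> J \<and> b \<in> J then X$a$b else if a = b then 1 else 0)" for a b
    by (simp add: P_def padm_def)
  have Qe: "Q$a$b = (if a \<in> J - {j} \<and> b \<in> J - {j} then X$a$b - X$a$j * X$j$b / X$j$j else if a = b then 1 else 0)" for a b
    by (auto simp: Q_def padm_def schur_def)
  have M1j: "M1$a$j = (if a = j then X$j$j else 0)" for a
    using d j by (auto simp: M1e Pe)
  have key: "transpose T2 = (\<chi> a. if a = j then X$j$j *s row j Q else row a Q)"
  proof -
    have "T2$b$a = (if a = j then X$j$j * Q$j$b else Q$a$b)" for a b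
    proof -
      consider "a = j" | "a \<in> J - {j}" | "a \<notin> J" by blast
      then show ?thesis
      proof cases
        case 1
        then show ?thesis using d j
          by (cases "b \<in> J - {j}") (auto simp: T2e M1j M1e Pe Qe)
      next
        case 2
        then have aj: "a \<noteq> j" "a \<in> J" by auto
        show ?thesis
        proof (cases "b \<in> J - {j}")
          case True
          then show ?thesis using aj j d by (simp add: T2e M1j M1e Pe Qe)
        next
          case False
          then show ?thesis using aj j d by (cases "b = j") (auto simp: T2e M1j M1e Pe Qe)
        qed
      next
        case 3
        then have aj: "a \<noteq> j" using j by auto
        show ?thesis
          using 3 aj j d by (cases "b \<in> J - {j}") (auto simp: T2e M1j M1e Pe Qe)
      qed
    qed
    then show ?thesis by (simp add: vec_eq_iff transpose_def row_def)
  qed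
  have "det (transpose T2) = X$j$j * det (\<chi> a. if a = j then row j Q else row a Q)"
    unfolding key by (rule det_row_mul)
  also have "(\<chi> a. if a = j then row j Q else row a Q) = Q"
    by (simp add: vec_eq_iff row_def)
  finally have "det T2 = X$j$j * det Q" by simp
  then show ?thesis using dT2 dM1 by (simp add: detJ_pad P_def Q_def)
qed


definition qf :: "'n::finite set \<Rightarrow> real^'n^'n \<Rightarrow> ('n \<Rightarrow> real) \<Rightarrow> real" where
  "qf J X x = (\<Sum>a\<in>J. \<Sum>b\<in>J. x a * X$a$b * x b)"

definition symJ :: "'n::finite set \<Rightarrow> real^'n^'n \<Rightarrow> bool" where
  "symJ J X \<longleftrightarrow> (\<forall>a\<in>J. \<forall>b\<in>J. X$a$b = X$b$a)"

definition pdJ :: "'n::finite set \<Rightarrow> real^'n^'n \<Rightarrow> bool" where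
  "pdJ J X \<longleftrightarrow> symJ J X \<and> (\<forall>x. (\<exists>i\<in>J. x i \<noteq> 0) \<longrightarrow> 0 < qf J X x)"

definition psdJ :: "'n::finite set \<Rightarrow> real^'n^'n \<Rightarrow> bool" where
  "psdJ J X \<longleftrightarrow> symJ J X \<and> (\<forall>x. 0 \<le> qf J X x)"

lemma symJ_D: "symJ J X \<Longrightarrow> a \<in> J \<Longrightarrow> b \<in> J \<Longrightarrow> X$a$b = X$b$a"
  unfolding symJ_def by blast

lemma qf_add: "qf J (X + Y) x = qf J X x + qf J Y x"
  by (simp add: qf_def algebra_simps sum.distrib)

lemma qf_zero: "qf J 0 x = 0"
  by (simp add: qf_def)

lemma qf_sum: "finite S \<Longrightarrow> qf J (\<Sum>i\<in>S. A i) x = (\<Sum>i\<in>S. qf J (A i) x)"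
  by (induction S rule: finite_induct) (auto simp: qf_zero qf_add)

lemma symJ_add: "symJ J X \<Longrightarrow> symJ J Y \<Longrightarrow> symJ J (X + Y)"
  by (simp add: symJ_def)

lemma symJ_zero: "symJ J 0"
  by (simp add: symJ_def)

lemma pd_add_psd: "pdJ J X \<Longrightarrow> psdJ J Y \<Longrightarrow> pdJ J (X + Y)"
  unfolding pdJ_def psdJ_def
  by (auto simp: qf_add symJ_add add_pos_nonneg)

lemma psd_add: "psdJ J X \<Longrightarrow> psdJ J Y \<Longrightarrow> psdJ J (X + Y)"
  unfolding psdJ_def
  by (auto simp: qf_add symJ_add)

lemma psd_sum: "finite S \<Longrightarrow> (\<forall>i\<in>S. psdJ J (A i)) \<Longrightarrow> psdJ J (\<Sum>i\<in>S. A i)"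
proof (induction S rule: finite_induct)
  case empty
  then show ?case by (simp add: psdJ_def symJ_zero qf_zero)
next
  case (insert x F)
  then show ?case by (simp add: psd_add)
qed

lemma qf_vanish: "(\<forall>i\<in>J. x i = 0) \<Longrightarrow> qf J X x = 0"
  by (simp add: qf_def)

lemma pd_psd: "pdJ J X \<Longrightarrow> psdJ J X"
  unfolding pdJ_def psdJ_def
  by (metis less_le order_refl qf_vanish)

lemma qf_restrict:
  assumes "J \<subseteq> J'"
  shows "qf J' X (\<lambda>i. if i \<in> J then x i else 0) = qf J X x"
proof -
  have "qf J' X (\<lambda>i. if i \<in> J then x i else 0)
      = (\<Sum>a\<in>J'. if a \<in> J then (\<Sum>b\<in>J'. if b \<in> J then x a * X$a$b * x b else 0) else 0)"
  proof -
    have h: "(\<Sum>b\<in>J'. x a * X$a$b * (if b \<in> J then x b else 0)) = (\<Sum>b\<in>J'. if b \<in> J then x a * X$a$b * x b else 0)" for a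
      by (intro sum.cong) auto
    show ?thesis unfolding qf_def using h by (intro sum.cong) auto
  qed
  also have "\<dots> = (\<Sum>a\<in>J. \<Sum>b\<in>J. x a * X$a$b * x b)"
    using assms by (simp add: sum.inter_restrict[symmetric] Int_absorb1)
  finally show ?thesis by (simp add: qf_def)
qed

lemma pd_mono:
  fixes X :: "real^'n::finite^'n"
  shows "J \<subseteq> J' \<Longrightarrow> pdJ J' X \<Longrightarrow> pdJ J X"
  unfolding pdJ_def symJ_def
proof (intro conjI allI impI)
  fix x :: "'n \<Rightarrow> real" assume JJ: "J \<subseteq> J'" and h: "(\<forall>a\<in>J'. \<forall>b\<in>J'. X $ a $ b = X $ b $ a) \<and> (\<forall>x. (\<exists>i\<in>J'. x i \<noteq> 0) \<longrightarrow> 0 < qf J' X x)"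
    and x: "\<exists>i\<in>J. x i \<noteq> 0"
  then have "0 < qf J' X (\<lambda>i. if i \<in> J then x i else 0)"
    by (metis (mono_tags, lifting) subsetD)
  then show "0 < qf J X x" using qf_restrict[OF JJ] by simp
qed blast

lemma psd_mono: "J \<subseteq> J' \<Longrightarrow> psdJ J' X \<Longrightarrow> psdJ J X"
  unfolding psdJ_def symJ_def
  by (metis qf_restrict subsetD)

lemma qf_insert:
  assumes "j \<notin> I"
  shows "qf (insert j I) X w = w j * X$j$j * w j + w j * (\<Sum>b\<in>I. X$j$b * w b)
     + (\<Sum>a\<in>I. w a * X$a$j) * w j + qf I X w"
proof -
  have "qf (insert j I) X w = (w j * X$j$j * w j + (\<Sum>b\<in>I. w j * X$j$b * w b))
     + (\<Sum>a\<in>I. w a * X$a$j * w j + (\<Sum>b\<in>I. w a * X$a$b * w b))"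
    using assms by (simp add: qf_def)
  also have "(\<Sum>a\<in>I. w a * X$a$j * w j + (\<Sum>b\<in>I. w a * X$a$b * w b))
      = (\<Sum>a\<in>I. w a * X$a$j * w j) + qf I X w"
    by (simp add: sum.distrib qf_def)
  also have "(\<Sum>b\<in>I. w j * X$j$b * w b) = w j * (\<Sum>b\<in>I. X$j$b * w b)"
    by (simp add: sum_distrib_left mult.assoc)
  also have "(\<Sum>a\<in>I. w a * X$a$j * w j) = (\<Sum>a\<in>I. w a * X$a$j) * w j"
    by (simp add: sum_distrib_right)
  finally show ?thesis by simp
qed

lemma qf_schur_expand:
  "qf I (schur j X) z = qf I X z - (\<Sum>a\<in>I. z a * X$a$j) * (\<Sum>b\<in>I. X$j$b * z b) / X$j$j"
proof -
  have "qf I (schur j X) z = (\<Sum>a\<in>I. \<Sum>b\<in>I. z a * X$a$b * z b - (z a * X$a$j) * (X$j$b * z b) / X$j$j)"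
    unfolding qf_def schur_def by (intro sum.cong) (auto simp: algebra_simps diff_divide_distrib)
  also have "\<dots> = qf I X z - (\<Sum>a\<in>I. \<Sum>b\<in>I. (z a * X$a$j) * (X$j$b * z b)) / X$j$j"
    by (simp add: qf_def sum_subtractf sum_divide_distrib)
  also have "(\<Sum>a\<in>I. \<Sum>b\<in>I. (z a * X$a$j) * (X$j$b * z b)) = (\<Sum>a\<in>I. z a * X$a$j) * (\<Sum>b\<in>I. X$j$b * z b)"
    by (simp add: sum_product)
  finally show ?thesis .
qed

lemma qf_schur:
  assumes j: "j \<notin> I" and s: "symJ (insert j I) X" and d: "X$j$j \<noteq> 0"
  shows "qf (insert j I) X (z(j:=t)) = X$j$j * (t + (\<Sum>b\<in>I. X$j$b * z b) / X$j$j)^2 + qf I (schur j X) z"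
proof -
  let ?L = "\<Sum>b\<in>I. X$j$b * z b"
  have L2: "(\<Sum>a\<in>I. z a * X$a$j) = ?L"
  proof (rule sum.cong[OF refl])
    fix a assume "a \<in> I"
    then have "X$a$j = X$j$a" using s symJ_D[of "insert j I" X a j] by simp
    then show "z a * X$a$j = X$j$a * z a" by simp
  qed
  have zI: "(\<Sum>b\<in>I. X$j$b * (z(j:=t)) b) = ?L" "(\<Sum>a\<in>I. (z(j:=t)) a * X$a$j) = (\<Sum>a\<in>I. z a * X$a$j)"
    using j by (auto intro!: sum.cong[OF refl])
  have qI: "qf I X (z(j:=t)) = qf I X z"
    using j unfolding qf_def by (auto intro!: sum.cong[OF refl])
  have "qf (insert j I) X (z(j:=t)) = t * X$j$j * t + t * ?L + ?L * t + qf I X z"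
    using qf_insert[OF j, of X "z(j:=t)"] zI qI L2 by simp
  also have "\<dots> = X$j$j * (t + ?L / X$j$j)^2 + (qf I X z - ?L * ?L / X$j$j)"
    using d by (simp add: power2_eq_square field_simps)
  also have "qf I X z - ?L * ?L / X$j$j = qf I (schur j X) z"
    using qf_schur_expand[of I j X z] L2 by simp
  finally show ?thesis .
qed

lemma pd_diag:
  assumes "pdJ J X" "j \<in> J"
  shows "0 < X$j$j"
proof -
  let ?x = "\<lambda>i. if i = j then 1 else (0::real)"
  have "0 < qf J X ?x" using assms unfolding pdJ_def by auto
  also have "qf J X ?x = qf (insert j (J - {j})) X ?x"
    using assms(2) by (simp add: insert_absorb)
  also have "\<dots> = X$j$j"
    by (subst qf_insert) (auto intro!: sum.neutral qf_vanish split: if_splits)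
  finally show ?thesis .
qed

lemma pd_schur:
  assumes j: "j \<notin> I" and pd: "pdJ (insert j I) X"
  shows "pdJ I (schur j X)"
proof -
  have d: "X$j$j \<noteq> 0" using pd_diag[OF pd, of j] by simp
  have s: "symJ (insert j I) X" using pd by (simp add: pdJ_def)
  have "symJ I (schur j X)"
    unfolding symJ_def
  proof (intro ballI)
    fix a b assume ab: "a \<in> I" "b \<in> I"
    have "X$a$b = X$b$a" "X$a$j = X$j$a" "X$j$b = X$b$j"
      using ab s symJ_D[of "insert j I" X] by auto
    then show "schur j X $ a $ b = schur j X $ b $ a"
      unfolding schur_def by simp
  qed
  moreover have "0 < qf I (schur j X) x" if x: "\<exists>i\<in>I. x i \<noteq> 0" for x
  proof -
    let ?t = "- (\<Sum>b\<in>I. X$j$b * x b) / X$j$j"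
    have "\<exists>i\<in>insert j I. (x(j:=?t)) i \<noteq> 0" using x j by (metis fun_upd_other insertCI)
    then have "0 < qf (insert j I) X (x(j:=?t))" using pd unfolding pdJ_def by blast
    also have "\<dots> = qf I (schur j X) x"
      using qf_schur[OF j s d, of x ?t] by simp
    finally show ?thesis .
  qed
  ultimately show ?thesis unfolding pdJ_def by blast
qed

lemma detJ_empty: "detJ {} X = 1"
  by (simp add: detJ_def)

lemma detJ_pos: "pdJ J X \<Longrightarrow> 0 < detJ J X"
proof -
  have "finite J" by simp
  then show "pdJ J X \<Longrightarrow> 0 < detJ J X"
  proof (induction J arbitrary: X rule: finite_induct)
    case empty
    then show ?case by (simp add: detJ_empty)
  next
    case (insert j I)
    have d: "0 < X$j$j" using pd_diag[OF insert.prems] by simp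
    have "detJ (insert j I) X = X$j$j * detJ I (schur j X)"
      using detJ_schur[of j "insert j I" X] d insert.hyps by simp
    moreover have "0 < detJ I (schur j X)"
      using insert.IH pd_schur[OF insert.hyps(2) insert.prems] by blast
    ultimately show ?case using d by simp
  qed
qed


definition Dd :: "(real^'n^'n \<Rightarrow> real) \<Rightarrow> real^'n^'n \<Rightarrow> (nat \<Rightarrow> real^'n^'n) \<Rightarrow> nat \<Rightarrow> real" where
  "Dd f X A m = (\<Sum>S\<in>Pow {1..m}. (-1)^card S * f (X + (\<Sum>i\<in>S. A i)))"

definition CM :: "'n::finite set \<Rightarrow> (real^'n^'n \<Rightarrow> real) \<Rightarrow> bool" where
  "CM J f \<longleftrightarrow> (\<forall>X A m. pdJ J X \<longrightarrow> (\<forall>i\<in>{1..m}. psdJ J (A i)) \<longrightarrow> 0 \<le> Dd f X A m)"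

lemma Dd_0: "Dd f X A 0 = f X"
  by (simp add: Dd_def)

lemma Pow_Suc_split:
  "Pow {1..Suc m} = Pow {1..m} \<union> insert (Suc m) ` Pow {1..m}"
  by (simp add: atLeastAtMostSuc_conv Pow_insert)

lemma Dd_Suc: "Dd f X A (Suc m) = Dd f X A m - Dd f (X + A (Suc m)) A m"
proof -
  have disj: "Pow {1..m} \<inter> insert (Suc m) ` Pow {1..m} = {}" by auto
  have inj: "inj_on (insert (Suc m)) (Pow {1..m})"
    by (rule inj_onI) (metis PowD atLeastAtMost_iff insert_ident not_less_eq_eq order_refl subsetD)
  have "Dd f X A (Suc m) = (\<Sum>S\<in>Pow {1..m}. (-1)^card S * f (X + (\<Sum>i\<in>S. A i)))
      + (\<Sum>S\<in>insert (Suc m) ` Pow {1..m}. (-1)^card S * f (X + (\<Sum>i\<in>S. A i)))"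
    unfolding Dd_def Pow_Suc_split by (rule sum.union_disjoint) (auto simp: disj)
  also have "(\<Sum>S\<in>insert (Suc m) ` Pow {1..m}. (-1)^card S * f (X + (\<Sum>i\<in>S. A i)))
     = (\<Sum>S\<in>Pow {1..m}. (-1)^card (insert (Suc m) S) * f (X + (\<Sum>i\<in>insert (Suc m) S. A i)))"
    by (rule sum.reindex[OF inj, unfolded comp_def])
  also have "\<dots> = (\<Sum>S\<in>Pow {1..m}. - ((-1)^card S * f ((X + A (Suc m)) + (\<Sum>i\<in>S. A i))))"
  proof (rule sum.cong[OF refl])
    fix S assume S: "S \<in> Pow {1..m}"
    then have fin: "finite S" and nS: "Suc m \<notin> S" by (auto intro: finite_subset)
    then show "(-1)^card (insert (Suc m) S) * f (X + (\<Sum>i\<in>insert (Suc m) S. A i))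
        = - ((-1)^card S * f ((X + A (Suc m)) + (\<Sum>i\<in>S. A i)))"
      by (simp add: add.assoc)
  qed
  also have "\<dots> = - Dd f (X + A (Suc m)) A m"
    by (simp add: Dd_def sum_negf)
  finally show ?thesis by (simp add: Dd_def)
qed

lemma Dd_diff: "Dd (\<lambda>Y. f Y - g Y) X A m = Dd f X A m - Dd g X A m"
  by (simp add: Dd_def sum_subtractf right_diff_distrib)

lemma Dd_add: "Dd (\<lambda>Y. f Y + g Y) X A m = Dd f X A m + Dd g X A m"
  by (simp add: Dd_def sum.distrib distrib_left)

lemma Dd_scale: "Dd (\<lambda>Y. c * f Y) X A m = c * Dd f X A m"
  by (simp add: Dd_def sum_distrib_left mult.left_commute)

lemma Dd_shift: "Dd (\<lambda>Y. f (Y + a)) X A m = Dd f (X + a) A m"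
  unfolding Dd_def by (simp add: add_ac)

lemma Dd_upd: "Dd f X (A(Suc m := a)) m = Dd f X A m"
  unfolding Dd_def
proof (rule sum.cong[OF refl])
  fix S assume "S \<in> Pow {1..m}"
  then have "(\<Sum>i\<in>S. (A(Suc m := a)) i) = (\<Sum>i\<in>S. A i)"
    by (intro sum.cong) auto
  then show "(-1)^card S * f (X + (\<Sum>i\<in>S. (A(Suc m := a)) i)) = (-1)^card S * f (X + (\<Sum>i\<in>S. A i))"
    by simp
qed

lemma pd_add_sum:
  fixes m :: nat
  assumes "pdJ J X" "\<forall>i\<in>{1..m}. psdJ J (A i)" "S \<subseteq> {1..m}"
  shows "pdJ J (X + (\<Sum>i\<in>S. A i))"
proof -
  have "finite S" by (meson assms(3) finite_atLeastAtMost finite_subset)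
  then have "psdJ J (\<Sum>i\<in>S. A i)" using assms(2,3) by (intro psd_sum) auto
  then show ?thesis by (rule pd_add_psd[OF assms(1)])
qed

lemma CM_nonneg: "CM J f \<Longrightarrow> pdJ J X \<Longrightarrow> 0 \<le> f X"
  unfolding CM_def using Dd_0 by (metis atLeastAtMost_iff not_one_le_zero order_trans)

lemma CM_Delta:
  assumes "CM J g" "psdJ J a"
  shows "CM J (\<lambda>Y. g Y - g (Y + a))"
  unfolding CM_def
proof (intro allI impI)
  fix X A and m :: nat assume X: "pdJ J X" and A: "\<forall>i\<in>{1..m}. psdJ J (A i)"
  let ?A = "A(Suc m := a)"
  have "Dd (\<lambda>Y. g Y - g (Y + a)) X A m = Dd g X ?A m - Dd g (X + ?A (Suc m)) ?A m"
    by (simp add: Dd_diff Dd_shift Dd_upd)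
  also have "\<dots> = Dd g X ?A (Suc m)" by (simp add: Dd_Suc)
  also have "0 \<le> \<dots>"
  proof -
    have "\<forall>i\<in>{1..Suc m}. psdJ J (?A i)" using A assms(2) by (auto simp: le_Suc_eq)
    then show ?thesis using assms(1) X unfolding CM_def by blast
  qed
  finally show "0 \<le> Dd (\<lambda>Y. g Y - g (Y + a)) X A m" .
qed

lemma CM_shift:
  assumes "CM J g" "psdJ J a"
  shows "CM J (\<lambda>Y. g (Y + a))"
  using assms unfolding CM_def by (simp add: Dd_shift pd_add_psd)

lemma CM_mult_aux:
  "\<forall>f g X A. CM J f \<longrightarrow> CM J g \<longrightarrow> pdJ J X \<longrightarrow> (\<forall>i\<in>{1..m}. psdJ J (A i))
     \<longrightarrow> 0 \<le> Dd (\<lambda>Y. f Y * g Y) X A m"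
proof (induction m)
  case 0
  then show ?case by (auto simp: Dd_0 CM_nonneg)
next
  case (Suc m)
  show ?case
  proof (intro allI impI)
    fix f g X A assume f: "CM J f" and g: "CM J g" and X: "pdJ J X"
      and A: "\<forall>i\<in>{1..Suc m}. psdJ J (A i)"
    let ?a = "A (Suc m)"
    have a: "psdJ J ?a" using A by simp
    have Am: "\<forall>i\<in>{1..m}. psdJ J (A i)" using A by simp
    have "Dd (\<lambda>Y. f Y * g Y) X A (Suc m) = Dd (\<lambda>Y. f Y * g Y - f (Y + ?a) * g (Y + ?a)) X A m"
      using Dd_shift[of "\<lambda>Y. f Y * g Y" ?a X A m] by (simp add: Dd_Suc Dd_diff)
    also have "(\<lambda>Y. f Y * g Y - f (Y + ?a) * g (Y + ?a))
       = (\<lambda>Y. f Y * (g Y - g (Y + ?a)) + (f Y - f (Y + ?a)) * g (Y + ?a))"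
      by (simp add: algebra_simps)
    also have "Dd \<dots> X A m = Dd (\<lambda>Y. f Y * (g Y - g (Y + ?a))) X A m
        + Dd (\<lambda>Y. (f Y - f (Y + ?a)) * g (Y + ?a)) X A m"
      by (rule Dd_add)
    also have "0 \<le> \<dots>"
    proof (rule add_nonneg_nonneg)
      show "0 \<le> Dd (\<lambda>Y. f Y * (g Y - g (Y + ?a))) X A m"
        using Suc.IH f CM_Delta[OF g a] X Am by blast
      show "0 \<le> Dd (\<lambda>Y. (f Y - f (Y + ?a)) * g (Y + ?a)) X A m"
        using Suc.IH CM_Delta[OF f a] CM_shift[OF g a] X Am by blast
    qed
    finally show "0 \<le> Dd (\<lambda>Y. f Y * g Y) X A (Suc m)" .
  qed
qed

lemma CM_mult: "CM J f \<Longrightarrow> CM J g \<Longrightarrow> CM J (\<lambda>Y. f Y * g Y)"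
  using CM_mult_aux unfolding CM_def by blast

lemma CM_scale: "0 \<le> c \<Longrightarrow> CM J f \<Longrightarrow> CM J (\<lambda>Y. c * f Y)"
  unfolding CM_def by (simp add: Dd_scale)

lemma CM_cong:
  assumes "\<And>Y. pdJ J Y \<Longrightarrow> f Y = g Y" "CM J f"
  shows "CM J g"
  unfolding CM_def
proof (intro allI impI)
  fix X A and m :: nat assume X: "pdJ J X" and A: "\<forall>i\<in>{1..m}. psdJ J (A i)"
  have "Dd g X A m = Dd f X A m"
    unfolding Dd_def
  proof (rule sum.cong[OF refl])
    fix S assume "S \<in> Pow {1..m}"
    then have "pdJ J (X + (\<Sum>i\<in>S. A i))" using pd_add_sum[OF X A] by auto
    then show "(-1)^card S * g (X + (\<Sum>i\<in>S. A i)) = (-1)^card S * f (X + (\<Sum>i\<in>S. A i))"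
      using assms(1) by simp
  qed
  then show "0 \<le> Dd g X A m" using assms(2) X A unfolding CM_def by simp
qed

lemma CM_mono:
  fixes f :: "real^'n::finite^'n \<Rightarrow> real"
  shows "J \<subseteq> J' \<Longrightarrow> CM J f \<Longrightarrow> CM J' f"
  unfolding CM_def using pd_mono psd_mono by blast

lemma Dd_const: "Dd (\<lambda>Y. c) X A m = (if m = 0 then c else 0)"
  by (induction m arbitrary: X) (simp_all add: Dd_0 Dd_Suc)

lemma CM_const: "0 \<le> c \<Longrightarrow> CM J (\<lambda>Y. c)"
  unfolding CM_def by (simp add: Dd_const)

lemma Dd_exp:
  assumes L: "\<And>Y Z. L (Y + Z) = L Y + L Z"
  shows "Dd (\<lambda>Y. exp (- L Y)) X A m = exp (- L X) * (\<Prod>i\<in>{1..m}. 1 - exp (- L (A i)))"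
proof (induction m arbitrary: X)
  case 0
  then show ?case by (simp add: Dd_0)
next
  case (Suc m)
  have "Dd (\<lambda>Y. exp (- L Y)) X A (Suc m) = exp (- L X) * (\<Prod>i\<in>{1..m}. 1 - exp (- L (A i)))
     - exp (- L X - L (A (Suc m))) * (\<Prod>i\<in>{1..m}. 1 - exp (- L (A i)))"
    by (simp add: Dd_Suc Suc.IH L)
  also have "\<dots> = exp (- L X) * ((\<Prod>i\<in>{1..m}. 1 - exp (- L (A i))) * (1 - exp (- L (A (Suc m)))))"
  proof -
    have "exp (- L X - L (A (Suc m))) = exp (- L X) * exp (- L (A (Suc m)))"
      by (metis diff_conv_add_uminus exp_add)
    then show ?thesis by (simp add: algebra_simps)
  qed
  also have "(\<Prod>i\<in>{1..m}. 1 - exp (- L (A i))) * (1 - exp (- L (A (Suc m)))) = (\<Prod>i\<in>{1..Suc m}. 1 - exp (- L (A i)))"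
    by (simp add: atLeastAtMostSuc_conv mult.commute)
  finally show ?case .
qed

lemma Dd_exp_nonneg:
  assumes L: "\<And>Y Z. L (Y + Z) = L Y + L Z" and pos: "\<forall>i\<in>{1..m}. 0 \<le> L (A i)"
  shows "0 \<le> Dd (\<lambda>Y. exp (- L Y)) X A m"
  unfolding Dd_exp[OF L]
  using pos by (intro mult_nonneg_nonneg prod_nonneg) auto


lemma gauss_nn: "(\<integral>\<^sup>+x. ennreal (exp (- x\<^sup>2)) \<partial>lborel) = ennreal (sqrt pi)"
proof -
  have hb: "has_bochner_integral lborel (\<lambda>x::real. exp (- x\<^sup>2)) (sqrt pi)"
    using has_bochner_integral_even_function[OF gaussian_moment_even_pos[where k=0]] by simp
  then have "integrable lborel (\<lambda>x::real. exp (- x\<^sup>2))" "integral\<^sup>L lborel (\<lambda>x::real. exp (- x\<^sup>2)) = sqrt pi"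
    by (auto simp: has_bochner_integral_iff)
  then show ?thesis using nn_integral_eq_integral[of lborel "\<lambda>x::real. exp (- x\<^sup>2)"] by simp
qed

lemma gauss_shift_nn:
  assumes d: "0 < d"
  shows "(\<integral>\<^sup>+t. ennreal (exp (- (d * (t + c)\<^sup>2))) \<partial>lborel) = ennreal (sqrt pi / sqrt d)"
proof -
  have sd: "0 < sqrt d" using d by simp
  have "(\<integral>\<^sup>+t. ennreal (exp (- (d * (t + c)\<^sup>2))) \<partial>lborel)
      = ennreal \<bar>1 / sqrt d\<bar> * (\<integral>\<^sup>+x. ennreal (exp (- (d * ((- c + (1 / sqrt d) * x) + c)\<^sup>2))) \<partial>lborel)"
    by (rule nn_integral_real_affine) (use sd in auto)
  also have "(\<lambda>x. ennreal (exp (- (d * ((- c + (1 / sqrt d) * x) + c)\<^sup>2)))) = (\<lambda>x. ennreal (exp (- x\<^sup>2)))"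
  proof
    fix x
    have "d * ((- c + (1 / sqrt d) * x) + c)\<^sup>2 = d * (x\<^sup>2 / (sqrt d)\<^sup>2)"
      by (simp add: power_divide)
    also have "\<dots> = x\<^sup>2" using d by simp
    finally show "ennreal (exp (- (d * ((- c + (1 / sqrt d) * x) + c)\<^sup>2))) = ennreal (exp (- x\<^sup>2))" by simp
  qed
  finally show ?thesis using sd by (simp add: gauss_nn ennreal_mult[symmetric])
qed

definition Kc :: "real \<Rightarrow> ennreal" where
  "Kc g = (\<integral>\<^sup>+s. ennreal (\<bar>s\<bar> powr g * exp (- s\<^sup>2)) \<partial>lborel)"

lemma powr_unit_int:
  assumes g: "-1 < g"
  shows "(\<integral>\<^sup>+s. ennreal (indicator {0..1} s * s powr g) \<partial>lborel) = ennreal (1 / (g + 1))"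
proof -
  have "((\<lambda>x. x powr g) has_integral (1 powr (g+1) / (g+1))) {0..1::real}"
    by (rule has_integral_powr_from_0) (use g in auto)
  then have "integral\<^sup>N lborel (\<lambda>x. indicator {0..1::real} x * x powr g) = 1 powr (g+1) / (g+1)"
    by (intro nn_integral_has_integral_lebesgue) auto
  then show ?thesis by simp
qed

lemma Kc_finite:
  assumes g: "-1 < g"
  shows "Kc g < \<infinity>"
proof -
  define k where "k = nat \<lceil>g\<rceil>"
  have gk: "g \<le> real (2 * k)" unfolding k_def by linarith
  let ?f1 = "\<lambda>s::real. ennreal (indicator {0..1} s * s powr g)"
  let ?f2 = "\<lambda>s::real. ennreal (exp (- s\<^sup>2) * s ^ (2 * k))"
  have bound: "ennreal (\<bar>s\<bar> powr g * exp (- s\<^sup>2)) \<le> ?f1 s + ?f1 (-s) + ?f2 s" for s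
  proof (cases "\<bar>s\<bar> \<le> 1")
    case True
    have "\<bar>s\<bar> powr g * exp (- s\<^sup>2) \<le> \<bar>s\<bar> powr g" by (rule mult_left_le) auto
    also have "\<bar>s\<bar> powr g = indicator {0..1} s * s powr g + indicator {0..1} (-s) * (-s) powr g"
      using True by (cases "s = 0") (auto simp: indicator_def)
    finally have "\<bar>s\<bar> powr g * exp (- s\<^sup>2) \<le> indicator {0..1} s * s powr g + indicator {0..1} (-s) * (-s) powr g" .
    then have "ennreal (\<bar>s\<bar> powr g * exp (- s\<^sup>2)) \<le> ?f1 s + ?f1 (-s)"
      by (simp add: ennreal_plus[symmetric] del: ennreal_plus)
    then show ?thesis by (meson add_increasing2 order_trans zero_le)
  next
    case False
    then have s1: "1 < \<bar>s\<bar>" by simp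
    have "\<bar>s\<bar> powr g \<le> \<bar>s\<bar> powr real (2 * k)"
      using s1 gk by (intro powr_mono) auto
    also have "\<dots> = \<bar>s\<bar> ^ (2 * k)"
      by (rule powr_realpow) (use s1 in auto)
    also have "\<dots> = s ^ (2 * k)"
      by (simp add: power_even_abs)
    finally have "\<bar>s\<bar> powr g * exp (- s\<^sup>2) \<le> exp (- s\<^sup>2) * s ^ (2 * k)"
      by (simp add: mult.commute)
    then have "ennreal (\<bar>s\<bar> powr g * exp (- s\<^sup>2)) \<le> ?f2 s"
      by (intro ennreal_leI)
    then show ?thesis by (simp add: add_increasing)
  qed
  have f2fin: "(\<integral>\<^sup>+s. ?f2 s \<partial>lborel) < \<infinity>"
  proof -
    have hb: "has_bochner_integral lborel (\<lambda>x::real. exp (- x\<^sup>2) * x ^ (2 * k))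
        (sqrt pi * (fact (2 * k) / (2 ^ (2 * k) * fact k)))"
      using has_bochner_integral_even_function[OF gaussian_moment_even_pos[where k=k]] by simp
    then have "integrable lborel (\<lambda>x::real. exp (- x\<^sup>2) * x ^ (2 * k))"
      by (auto simp: has_bochner_integral_iff)
    then have "(\<integral>\<^sup>+s. ?f2 s \<partial>lborel) = ennreal (integral\<^sup>L lborel (\<lambda>x::real. exp (- x\<^sup>2) * x ^ (2 * k)))"
      by (intro nn_integral_eq_integral) (auto simp: zero_le_mult_iff zero_le_even_power)
    then show ?thesis by simp
  qed
  have "Kc g \<le> (\<integral>\<^sup>+s. ?f1 s + ?f1 (-s) + ?f2 s \<partial>lborel)"
    unfolding Kc_def by (intro nn_integral_mono bound)
  also have "\<dots> = (\<integral>\<^sup>+s. ?f1 s \<partial>lborel) + (\<integral>\<^sup>+s. ?f1 (-s) \<partial>lborel) + (\<integral>\<^sup>+s. ?f2 s \<partial>lborel)"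
    by (subst nn_integral_add; simp add: nn_integral_add)
  also have "(\<integral>\<^sup>+s. ?f1 (-s) \<partial>lborel) = (\<integral>\<^sup>+s. ?f1 s \<partial>lborel)"
    using nn_integral_real_affine[of ?f1 "-1" 0] by simp
  also have "(\<integral>\<^sup>+s. ?f1 s \<partial>lborel) = ennreal (1 / (g + 1))"
    by (rule powr_unit_int[OF g])
  finally have "Kc g \<le> ennreal (1 / (g + 1)) + ennreal (1 / (g + 1)) + (\<integral>\<^sup>+s. ?f2 s \<partial>lborel)" .
  also have "\<dots> < \<infinity>" using f2fin by simp
  finally show ?thesis .
qed

lemma Kc_pos:
  shows "0 < Kc g"
proof (rule ccontr)
  assume "\<not> 0 < Kc g"
  then have "Kc g = 0" by (simp add: not_gr_zero)
  then have "AE s in lborel. ennreal (\<bar>s\<bar> powr g * exp (- s\<^sup>2)) = 0"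
    unfolding Kc_def by (subst (asm) nn_integral_0_iff_AE) auto
  then have "AE s in lborel. (s::real) = 0"
    by (rule eventually_mono) (auto simp: ennreal_eq_0_iff mult_le_0_iff powr_nonneg_iff)
  then have "AE s in lborel. (s::real) = 0 \<and> s \<noteq> 0"
    using AE_lborel_singleton[of "0::real"] by (intro eventually_conj)
  then have "AE s in (lborel::real measure). False"
    by simp
  then have "ae_filter (lborel::real measure) = bot"
    using trivial_limit_def by blast
  then show False using ae_filter_eq_bot_iff[of "lborel::real measure"] by simp
qed

lemma weighted_scale_nn:
  assumes a: "0 < a"
  shows "(\<integral>\<^sup>+t. ennreal (\<bar>t\<bar> powr g * exp (- (a * t\<^sup>2))) \<partial>lborel) = ennreal (a powr (- (g + 1) / 2)) * Kc g"
proof -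
  have sa: "0 < sqrt a" using a by simp
  have "(\<integral>\<^sup>+t. ennreal (\<bar>t\<bar> powr g * exp (- (a * t\<^sup>2))) \<partial>lborel)
      = ennreal \<bar>1 / sqrt a\<bar> * (\<integral>\<^sup>+x. ennreal (\<bar>0 + (1 / sqrt a) * x\<bar> powr g * exp (- (a * (0 + (1 / sqrt a) * x)\<^sup>2))) \<partial>lborel)"
    by (rule nn_integral_real_affine) (use sa in auto)
  also have "(\<lambda>x. ennreal (\<bar>0 + (1 / sqrt a) * x\<bar> powr g * exp (- (a * (0 + (1 / sqrt a) * x)\<^sup>2))))
      = (\<lambda>x. ennreal (a powr (- g / 2)) * ennreal (\<bar>x\<bar> powr g * exp (- x\<^sup>2)))"
  proof
    fix x
    have e1: "a * (0 + (1 / sqrt a) * x)\<^sup>2 = x\<^sup>2"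
      using a by (simp add: power_divide power_mult_distrib)
    have "\<bar>0 + (1 / sqrt a) * x\<bar> powr g = (1 / sqrt a) powr g * \<bar>x\<bar> powr g"
      using sa by (simp add: abs_mult powr_divide)
    also have "(1 / sqrt a) powr g = a powr (- g / 2)"
    proof -
      have "sqrt a powr g = a powr (g / 2)"
        using a by (subst powr_half_sqrt[symmetric]) (simp_all add: powr_powr)
      then show ?thesis using sa by (simp add: powr_divide powr_minus_divide)
    qed
    finally show "ennreal (\<bar>0 + (1 / sqrt a) * x\<bar> powr g * exp (- (a * (0 + (1 / sqrt a) * x)\<^sup>2)))
        = ennreal (a powr (- g / 2)) * ennreal (\<bar>x\<bar> powr g * exp (- x\<^sup>2))"
      using e1 by (simp add: ennreal_mult[symmetric] mult.assoc)
  qed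
  also have "(\<integral>\<^sup>+x. ennreal (a powr (- g / 2)) * ennreal (\<bar>x\<bar> powr g * exp (- x\<^sup>2)) \<partial>lborel)
      = ennreal (a powr (- g / 2)) * Kc g"
    unfolding Kc_def by (rule nn_integral_cmult) simp
  also have "ennreal \<bar>1 / sqrt a\<bar> * (ennreal (a powr (- g / 2)) * Kc g) = ennreal (a powr (- (g + 1) / 2)) * Kc g"
  proof -
    have "\<bar>1 / sqrt a\<bar> = a powr (- 1 / 2)"
      using a by (subst powr_half_sqrt[symmetric]) (simp_all add: powr_minus_divide)
    moreover have ex: "- (g + 1) / 2 = - 1 / 2 + - g / 2" by (simp add: field_simps)
    have h2: "a powr (- (g + 1) / 2) = a powr (- 1 / 2) * a powr (- g / 2)"
      unfolding ex by (rule powr_add)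
    ultimately have "\<bar>1 / sqrt a\<bar> * a powr (- g / 2) = a powr (- (g + 1) / 2)"
      by (simp only: h2)
    then show ?thesis
      by (simp add: mult.assoc[symmetric] ennreal_mult[symmetric])
  qed
  finally show ?thesis .
qed


lemma psf: "product_sigma_finite (\<lambda>_::'n. lborel::real measure)"
  unfolding product_sigma_finite_def by (simp add: lborel.sigma_finite_measure_axioms)

definition Wn :: "'n::finite set \<Rightarrow> 'n \<Rightarrow> real \<Rightarrow> real^'n^'n \<Rightarrow> ennreal" where
  "Wn J k g X = (\<integral>\<^sup>+z. ennreal (\<bar>z k\<bar> powr g * exp (- qf J X z)) \<partial>(PiM J (\<lambda>_. lborel)))"

lemma comp_meas:
  "a \<in> J \<Longrightarrow> (\<lambda>z. z a) \<in> borel_measurable (PiM J (\<lambda>_. lborel::real measure))"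
  using measurable_component_singleton[of a J "\<lambda>_. lborel::real measure"] by simp

lemma qf_meas:
  "(\<lambda>z. qf J X z) \<in> borel_measurable (PiM J (\<lambda>_. lborel::real measure))"
  unfolding qf_def
  by (intro borel_measurable_sum borel_measurable_times comp_meas borel_measurable_const)

lemma W_meas:
  assumes "k \<in> J"
  shows "(\<lambda>z. ennreal (\<bar>z k\<bar> powr g * exp (- qf J X z))) \<in> borel_measurable (PiM J (\<lambda>_. lborel::real measure))"
proof -
  have "(\<lambda>z. z k) \<in> borel_measurable (PiM J (\<lambda>_. lborel::real measure))" using assms by (rule comp_meas)
  moreover have "(\<lambda>z. qf J X z) \<in> borel_measurable (PiM J (\<lambda>_. lborel::real measure))" by (rule qf_meas)
  ultimately show ?thesis by measurable
qed

lemma detJ_single: "X$k$k \<noteq> 0 \<Longrightarrow> detJ {k} X = X$k$k"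
  using detJ_schur[of k "{k}" X] by (simp add: detJ_empty)

lemma W_base:
  assumes "pdJ {k} X"
  shows "Wn {k} k g X = ennreal (X$k$k powr (- (g + 1) / 2)) * Kc g"
proof -
  have d: "0 < X$k$k" using pd_diag[OF assms] by simp
  let ?f = "\<lambda>t. ennreal (\<bar>t\<bar> powr g * exp (- (X$k$k * t\<^sup>2)))"
  have "Wn {k} k g X = (\<integral>\<^sup>+z. ?f (z k) \<partial>(PiM {k} (\<lambda>_. lborel)))"
    unfolding Wn_def qf_def by (simp add: power2_eq_square mult_ac)
  also have "\<dots> = (\<integral>\<^sup>+t. ?f t \<partial>lborel)"
    by (rule product_sigma_finite.product_nn_integral_singleton[OF psf]) simp
  also have "\<dots> = ennreal (X$k$k powr (- (g + 1) / 2)) * Kc g"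
    by (rule weighted_scale_nn[OF d])
  finally show ?thesis .
qed

lemma real_step_identity:
  fixes c d p q g :: real
  assumes d: "0 < d" and p: "0 < p" and q: "0 < q"
  shows "c ^ Suc n * (d * p) powr (g / 2) * (d * q) powr (- (g + 1) / 2)
       = c ^ n * p powr (g / 2) * q powr (- (g + 1) / 2) * (c / sqrt d)"
proof -
  have "d powr (g / 2) * d powr (- (g + 1) / 2) = d powr (g / 2 + - (g + 1) / 2)"
    by (rule powr_add[symmetric])
  also have "g / 2 + - (g + 1) / 2 = - (1 / 2)" by (simp add: field_simps)
  also have "d powr - (1 / 2) = 1 / sqrt d"
    using d by (simp add: powr_minus_divide powr_half_sqrt)
  finally have dd: "d powr (g / 2) * d powr (- (g + 1) / 2) = 1 / sqrt d" .
  have "c ^ Suc n * (d * p) powr (g / 2) * (d * q) powr (- (g + 1) / 2)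
      = c ^ n * p powr (g / 2) * q powr (- (g + 1) / 2) * (c * (d powr (g / 2) * d powr (- (g + 1) / 2)))"
    using d p q by (simp add: powr_mult mult_ac)
  also have "\<dots> = c ^ n * p powr (g / 2) * q powr (- (g + 1) / 2) * (c / sqrt d)"
    unfolding dd by simp
  finally show ?thesis .
qed

lemma W_formula:
  assumes g: "-1 < g"
  shows "finite I \<Longrightarrow> k \<notin> I \<Longrightarrow> pdJ (insert k I) X \<Longrightarrow>
    Wn (insert k I) k g X = ennreal (sqrt pi ^ card I * detJ I X powr (g / 2) * detJ (insert k I) X powr (- (g + 1) / 2)) * Kc g"
proof (induction I arbitrary: X rule: finite_induct)
  case empty
  have d: "0 < X$k$k" using pd_diag[OF empty.prems(2)] by simp
  show ?case using W_base[OF empty.prems(2)] d by (simp add: detJ_empty detJ_single)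
next
  case (insert j I)
  define Ik where "Ik = insert k I"
  have kj: "k \<noteq> j" and kI: "k \<notin> I" using insert.prems by auto
  have jIk: "j \<notin> Ik" using insert.hyps kj by (auto simp: Ik_def)
  have eqset: "insert k (insert j I) = insert j Ik" by (auto simp: Ik_def)
  have pd: "pdJ (insert j Ik) X" using insert.prems(2) eqset by simp
  have d: "0 < X$j$j" using pd_diag[OF pd] by simp
  have sym: "symJ (insert j Ik) X" using pd by (simp add: pdJ_def)
  define S where "S = schur j X"
  have pdS: "pdJ Ik S" unfolding S_def by (rule pd_schur[OF jIk pd])
  have finIk: "finite Ik" by simp
  let ?h = "\<lambda>z. ennreal (\<bar>z k\<bar> powr g * exp (- qf Ik S z))"
  have "Wn (insert j Ik) k g X = (\<integral>\<^sup>+z. (\<integral>\<^sup>+t. ennreal (\<bar>(z(j:=t)) k\<bar> powr g * exp (- qf (insert j Ik) X (z(j:=t)))) \<partial>lborel) \<partial>(PiM Ik (\<lambda>_. lborel)))"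
    unfolding Wn_def
    by (rule product_sigma_finite.product_nn_integral_insert[OF psf finIk jIk]) (rule W_meas, simp add: Ik_def)
  also have "\<dots> = (\<integral>\<^sup>+z. ?h z * ennreal (sqrt pi / sqrt (X$j$j)) \<partial>(PiM Ik (\<lambda>_. lborel)))"
  proof (rule nn_integral_cong)
    fix z :: "'a \<Rightarrow> real"
    let ?c = "(\<Sum>b\<in>Ik. X$j$b * z b) / X$j$j"
    have "(\<lambda>t. ennreal (\<bar>(z(j:=t)) k\<bar> powr g * exp (- qf (insert j Ik) X (z(j:=t)))))
        = (\<lambda>t. ?h z * ennreal (exp (- (X$j$j * (t + ?c)\<^sup>2))))"
    proof
      fix t
      have "qf (insert j Ik) X (z(j:=t)) = X$j$j * (t + ?c)\<^sup>2 + qf Ik S z"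
        unfolding S_def by (rule qf_schur[OF jIk sym]) (use d in simp)
      moreover have "(z(j:=t)) k = z k" using kj by simp
      ultimately show "ennreal (\<bar>(z(j:=t)) k\<bar> powr g * exp (- qf (insert j Ik) X (z(j:=t))))
          = ?h z * ennreal (exp (- (X$j$j * (t + ?c)\<^sup>2)))"
        by (simp add: ennreal_mult[symmetric] exp_add[symmetric] mult.assoc)
    qed
    then have "(\<integral>\<^sup>+t. ennreal (\<bar>(z(j:=t)) k\<bar> powr g * exp (- qf (insert j Ik) X (z(j:=t)))) \<partial>lborel)
        = ?h z * (\<integral>\<^sup>+t. ennreal (exp (- (X$j$j * (t + ?c)\<^sup>2))) \<partial>lborel)"
      by (simp add: nn_integral_cmult)
    also have "\<dots> = ?h z * ennreal (sqrt pi / sqrt (X$j$j))"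
      by (simp add: gauss_shift_nn[OF d])
    finally show "(\<integral>\<^sup>+t. ennreal (\<bar>(z(j:=t)) k\<bar> powr g * exp (- qf (insert j Ik) X (z(j:=t)))) \<partial>lborel)
        = ?h z * ennreal (sqrt pi / sqrt (X$j$j))" .
  qed
  also have "\<dots> = Wn Ik k g S * ennreal (sqrt pi / sqrt (X$j$j))"
    unfolding Wn_def by (rule nn_integral_multc) (rule W_meas, simp add: Ik_def)
  also have "Wn Ik k g S = ennreal (sqrt pi ^ card I * detJ I S powr (g / 2) * detJ Ik S powr (- (g + 1) / 2)) * Kc g"
    unfolding Ik_def using insert.IH[OF kI] pdS by (simp add: Ik_def)
  finally have W0: "Wn (insert j Ik) k g X = ennreal (sqrt pi ^ card I * detJ I S powr (g / 2) * detJ Ik S powr (- (g + 1) / 2)) * Kc g * ennreal (sqrt pi / sqrt (X$j$j))" .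
  have nnA: "0 \<le> sqrt pi ^ card I * detJ I S powr (g / 2) * detJ Ik S powr (- (g + 1) / 2)" by simp
  have nnB: "0 \<le> sqrt pi / sqrt (X$j$j)" using d by simp
  have W1: "Wn (insert j Ik) k g X = ennreal (sqrt pi ^ card I * detJ I S powr (g / 2) * detJ Ik S powr (- (g + 1) / 2) * (sqrt pi / sqrt (X$j$j))) * Kc g"
    unfolding W0 ennreal_mult[OF nnA nnB] by (simp only: mult_ac)
  have pI: "0 < detJ I S" using detJ_pos pd_mono[OF _ pdS, of I] by (auto simp: Ik_def)
  have pIk: "0 < detJ Ik S" using detJ_pos[OF pdS] .
  have e1: "detJ (insert j I) X = X$j$j * detJ I S"
    using detJ_schur[of j "insert j I" X] d insert.hyps by (simp add: S_def)
  have e2: "detJ (insert j Ik) X = X$j$j * detJ Ik S"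
    using detJ_schur[of j "insert j Ik" X] d jIk by (simp add: S_def)
  have card: "card (insert j I) = Suc (card I)" using insert.hyps by simp
  show ?case
    unfolding eqset W1 e1 e2 card
    using real_step_identity[OF d pI pIk, of "sqrt pi" "card I" g] by simp
qed


lemma W_finite:
  assumes g: "-1 < g" and k: "k \<in> J" and Y: "pdJ J Y"
  shows "Wn J k g Y < \<infinity>"
proof -
  have J: "J = insert k (J - {k})" using k by auto
  have "Wn J k g Y = ennreal (sqrt pi ^ card (J - {k}) * detJ (J - {k}) Y powr (g / 2) * detJ (insert k (J - {k})) Y powr (- (g + 1) / 2)) * Kc g"
    using W_formula[OF g, of "J - {k}" k Y] Y J by simp
  then show ?thesis using Kc_finite[OF g] by (simp add: ennreal_mult_less_top)
qed

lemma h_meas: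
  "(\<lambda>z. \<bar>z k\<bar> powr g * exp (- qf J Y z)) \<in> borel_measurable (PiM J (\<lambda>_. lborel::real measure))"
  if "k \<in> J"
proof -
  have "(\<lambda>z. z k) \<in> borel_measurable (PiM J (\<lambda>_. lborel::real measure))" using that by (rule comp_meas)
  moreover have "(\<lambda>z. qf J Y z) \<in> borel_measurable (PiM J (\<lambda>_. lborel::real measure))" by (rule qf_meas)
  ultimately show ?thesis by measurable
qed

lemma CM_W:
  assumes g: "-1 < g" and k: "k \<in> J"
  shows "CM J (\<lambda>X. enn2real (Wn J k g X))"
proof -
  define h where "h Y z = \<bar>z k\<bar> powr g * exp (- qf J Y z)" for Y z
  let ?M = "PiM J (\<lambda>_. lborel::real measure)"
  have hm: "h Y \<in> borel_measurable ?M" for Y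
    unfolding h_def[abs_def] using h_meas[OF k] by simp
  have int: "integrable ?M (h Y)" if Y: "pdJ J Y" for Y
  proof (rule integrableI_nn_integral_finite[OF hm])
    show "AE x in ?M. 0 \<le> h Y x" by (simp add: h_def)
    have "(\<integral>\<^sup>+x. ennreal (h Y x) \<partial>?M) = Wn J k g Y" by (simp add: h_def Wn_def)
    also have "\<dots> = ennreal (enn2real (Wn J k g Y))"
      using W_finite[OF g k Y] by (simp add: less_top)
    finally show "(\<integral>\<^sup>+x. ennreal (h Y x) \<partial>?M) = ennreal (enn2real (Wn J k g Y))" .
  qed
  have val: "enn2real (Wn J k g Y) = integral\<^sup>L ?M (h Y)" for Y
  proof -
    have "integral\<^sup>L ?M (h Y) = enn2real (\<integral>\<^sup>+x. ennreal (h Y x) \<partial>?M)"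
      by (rule integral_eq_nn_integral[OF hm]) (simp add: h_def)
    then show ?thesis by (simp add: h_def Wn_def)
  qed
  show ?thesis
    unfolding CM_def
  proof (intro allI impI)
    fix X A and m :: nat
    assume X: "pdJ J X" and A: "\<forall>i\<in>{1..m}. psdJ J (A i)"
    let ?P = "Pow {1..m}"
    have pdS: "pdJ J (X + (\<Sum>i\<in>S. A i))" if "S \<in> ?P" for S
      using pd_add_sum[OF X A] that by auto
    have "Dd (\<lambda>X. enn2real (Wn J k g X)) X A m = (\<Sum>S\<in>?P. integral\<^sup>L ?M (\<lambda>z. (-1)^card S * h (X + (\<Sum>i\<in>S. A i)) z))"
      unfolding Dd_def by (simp add: val)
    also have "\<dots> = integral\<^sup>L ?M (\<lambda>z. \<Sum>S\<in>?P. (-1)^card S * h (X + (\<Sum>i\<in>S. A i)) z)"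
    proof -
      let ?f = "\<lambda>S z. (-1)^card S * h (X + (\<Sum>i\<in>S. A i)) z"
      have "integral\<^sup>L ?M (\<lambda>z. \<Sum>S\<in>?P. ?f S z) = (\<Sum>S\<in>?P. integral\<^sup>L ?M (?f S))"
      proof (rule Bochner_Integration.integral_sum)
        fix S assume "S \<in> ?P"
        then show "integrable ?M (?f S)" by (intro integrable_mult_right int pdS)
      qed
      then show ?thesis by simp
    qed
    also have "0 \<le> \<dots>"
    proof (rule Bochner_Integration.integral_nonneg)
      fix z :: "'a \<Rightarrow> real"
      have "(\<Sum>S\<in>?P. (-1)^card S * h (X + (\<Sum>i\<in>S. A i)) z)
          = \<bar>z k\<bar> powr g * Dd (\<lambda>Y. exp (- qf J Y z)) X A m"
        unfolding Dd_def h_def by (simp add: sum_distrib_left mult_ac)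
      also have "0 \<le> \<dots>"
      proof (rule mult_nonneg_nonneg)
        show "0 \<le> Dd (\<lambda>Y. exp (- qf J Y z)) X A m"
          by (rule Dd_exp_nonneg) (use A in \<open>auto simp: qf_add psdJ_def\<close>)
      qed simp
      finally show "0 \<le> (\<Sum>S\<in>?P. (-1)^card S * h (X + (\<Sum>i\<in>S. A i)) z)" .
    qed
    finally show "0 \<le> Dd (\<lambda>X. enn2real (Wn J k g X)) X A m" .
  qed
qed

definition Gind :: "nat \<Rightarrow> real set" where
  "Gind m = {r. (\<exists>k::nat. r = real k / 2) \<or> (real m - 1) / 2 \<le> r}"

lemma main_CM:
  fixes J :: "'n::finite set"
  shows "finite J \<Longrightarrow> \<forall>r\<in>Gind (card J). CM J (\<lambda>X. detJ J X powr (- r))"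
proof (induction J rule: finite_induct)
  case empty
  show ?case
  proof
    fix r
    show "CM {} (\<lambda>X. detJ {} X powr - r)"
      by (rule CM_cong[OF _ CM_const[of 1]]) (simp_all add: detJ_empty)
  qed
next
  case (insert k J)
  show ?case
  proof
    fix r assume r: "r \<in> Gind (card (insert k J))"
    then have rG: "(\<exists>n::nat. r = real n / 2) \<or> real (card J) / 2 \<le> r"
      using insert.hyps by (simp add: Gind_def)
    then have r0: "0 \<le> r" by auto
    show "CM (insert k J) (\<lambda>X. detJ (insert k J) X powr - r)"
    proof (cases "r = 0")
      case True
      show ?thesis
      proof (rule CM_cong[OF _ CM_const[of 1]])
        fix Y assume "pdJ (insert k J) Y"
        then have "0 < detJ (insert k J) Y" by (rule detJ_pos)
        then show "1 = detJ (insert k J) Y powr - r" using True by simp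
      qed simp
    next
      case False
      then have rpos: "0 < r" using r0 by simp
      have r'G: "r - 1/2 \<in> Gind (card J)"
        using rG rpos unfolding Gind_def
      proof (elim disjE exE)
        fix n :: nat assume n: "r = real n / 2"
        then have "1 \<le> n" using rpos by (cases n) auto
        then have "r - 1/2 = real (n - 1) / 2" using n by (simp add: of_nat_diff field_simps)
        then show "r - 1/2 \<in> {r. (\<exists>k::nat. r = real k / 2) \<or> (real (card J) - 1) / 2 \<le> r}" by blast
      next
        assume "real (card J) / 2 \<le> r"
        then show "r - 1/2 \<in> {r. (\<exists>k::nat. r = real k / 2) \<or> (real (card J) - 1) / 2 \<le> r}"
          by (simp add: field_simps)
      qed
      have IH0: "CM J (\<lambda>X. detJ J X powr (- (r - 1/2)))"
        using insert.IH r'G by blast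
      have IH: "CM (insert k J) (\<lambda>X. detJ J X powr (- (r - 1/2)))"
        by (rule CM_mono[OF _ IH0]) blast
      define g where "g = 2 * r - 1"
      have g: "-1 < g" using rpos by (simp add: g_def)
      have CW: "CM (insert k J) (\<lambda>X. enn2real (Wn (insert k J) k g X))"
        by (rule CM_W[OF g]) simp
      define C where "C = sqrt pi ^ card J * enn2real (Kc g)"
      have Kr: "0 < enn2real (Kc g)"
        using Kc_pos[of g] Kc_finite[OF g] by (simp add: enn2real_positive_iff less_top)
      have Cpos: "0 < C" unfolding C_def using Kr by simp
      have CM2: "CM (insert k J) (\<lambda>X. (1 / C) * (detJ J X powr (- (r - 1/2)) * enn2real (Wn (insert k J) k g X)))"
        using Cpos by (intro CM_scale CM_mult IH CW) simp
      show ?thesis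
      proof (rule CM_cong[OF _ CM2])
        fix Y assume Y: "pdJ (insert k J) Y"
        have pJ: "0 < detJ J Y" using detJ_pos pd_mono[OF _ Y, of J] by auto
        have pK: "0 < detJ (insert k J) Y" using detJ_pos[OF Y] .
        have "Wn (insert k J) k g Y = ennreal (sqrt pi ^ card J * detJ J Y powr (g / 2) * detJ (insert k J) Y powr (- (g + 1) / 2)) * Kc g"
          using W_formula[OF g insert.hyps Y] .
        then have "enn2real (Wn (insert k J) k g Y) = sqrt pi ^ card J * detJ J Y powr (g / 2) * detJ (insert k J) Y powr (- (g + 1) / 2) * enn2real (Kc g)"
          by (simp add: enn2real_mult)
        also have "g / 2 = r - 1/2" by (simp add: g_def)
        also have "- (g + 1) / 2 = - r" by (simp add: g_def)
        finally have Wv: "enn2real (Wn (insert k J) k g Y) = sqrt pi ^ card J * detJ J Y powr (r - 1/2) * detJ (insert k J) Y powr (- r) * enn2real (Kc g)" .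
        have pw: "detJ J Y powr (- (r - 1/2)) * detJ J Y powr (r - 1/2) = 1"
          using pJ by (simp add: powr_add[symmetric])
        have "(1 / C) * (detJ J Y powr (- (r - 1/2)) * enn2real (Wn (insert k J) k g Y))
            = (1 / C) * (sqrt pi ^ card J * enn2real (Kc g)) * (detJ J Y powr (- (r - 1/2)) * detJ J Y powr (r - 1/2)) * detJ (insert k J) Y powr (- r)"
          unfolding Wv by (simp add: mult_ac)
        also have "\<dots> = detJ (insert k J) Y powr (- r)"
          unfolding pw using Cpos Kr by (simp add: C_def)
        finally show "(1 / C) * (detJ J Y powr (- (r - 1/2)) * enn2real (Wn (insert k J) k g Y)) = detJ (insert k J) Y powr (- r)" .
      qed
    qed
  qed
qed


lemma padm_UNIV: "padm UNIV X = X"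
  by (simp add: padm_def vec_eq_iff)

lemma detJ_UNIV: "detJ UNIV X = det X"
  by (simp add: detJ_pad padm_UNIV)

lemma spd_pd:
  fixes A :: "real^'n::finite^'n"
  assumes h: "sym_pos_def_mat A"
  shows "pdJ UNIV A"
proof -
  have tA: "transpose A = A" and pos: "\<And>x::real^'n. x \<noteq> 0 \<Longrightarrow> x \<bullet> (A *v x) > 0"
    using h unfolding sym_pos_def_mat_def by auto
  have "A$a$b = A$b$a" for a b
  proof -
    have "transpose A $ a $ b = A $ b $ a" by (simp add: transpose_def)
    then show ?thesis using tA by simp
  qed
  then have sym: "symJ UNIV A" by (simp add: symJ_def)
  have "0 < qf UNIV A x" if x: "\<exists>i\<in>UNIV. x i \<noteq> 0" for x
  proof -
    define v :: "real^'n" where "v = (\<chi> i. x i)"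
    have "v \<noteq> 0" using x by (auto simp: v_def vec_eq_iff)
    then have "0 < v \<bullet> (A *v v)" by (rule pos)
    also have "v \<bullet> (A *v v) = qf UNIV A x"
      by (simp add: v_def inner_vec_def matrix_vector_mult_def qf_def sum_distrib_left mult.assoc)
    finally show ?thesis .
  qed
  then show ?thesis using sym by (simp add: pdJ_def)
qed

lemma tele:
  fixes f :: "real^'n::finite^'n \<Rightarrow> real" and A :: "nat \<Rightarrow> real^'n^'n"
  shows "(\<Sum>S\<in>{S. S \<subseteq> {1..Suc n} \<and> S \<noteq> {}}. (-1)^(card S - 1) * f (\<Sum>i\<in>S. A i))
    = (\<Sum>S\<in>{S. S \<subseteq> {1..n} \<and> S \<noteq> {}}. (-1)^(card S - 1) * f (\<Sum>i\<in>S. A i)) + Dd f (A (Suc n)) A n"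
proof -
  have seteq: "{S. S \<subseteq> {1..Suc n} \<and> S \<noteq> {}} = {S. S \<subseteq> {1..n} \<and> S \<noteq> {}} \<union> insert (Suc n) ` Pow {1..n}"
  proof (intro equalityI subsetI)
    fix S assume "S \<in> {S. S \<subseteq> {1..Suc n} \<and> S \<noteq> {}}"
    then have S: "S \<subseteq> {1..Suc n}" "S \<noteq> {}" by auto
    show "S \<in> {S. S \<subseteq> {1..n} \<and> S \<noteq> {}} \<union> insert (Suc n) ` Pow {1..n}"
    proof (cases "Suc n \<in> S")
      case True
      then have "S = insert (Suc n) (S - {Suc n})" by auto
      moreover have "S - {Suc n} \<in> Pow {1..n}" using S by (auto simp: le_Suc_eq)
      ultimately show ?thesis by blast
    next
      case False
      then have "S \<subseteq> {1..n}" using S by (auto simp: le_Suc_eq)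
      then show ?thesis using S by auto
    qed
  next
    fix S assume "S \<in> {S. S \<subseteq> {1..n} \<and> S \<noteq> {}} \<union> insert (Suc n) ` Pow {1..n}"
    then show "S \<in> {S. S \<subseteq> {1..Suc n} \<and> S \<noteq> {}}" by auto
  qed
  have disj: "{S. S \<subseteq> {1..n} \<and> S \<noteq> {}} \<inter> insert (Suc n) ` Pow {1..n} = {}" by auto
  have inj: "inj_on (insert (Suc n)) (Pow {1..n})"
    by (rule inj_onI) (metis PowD atLeastAtMost_iff insert_ident not_less_eq_eq order_refl subsetD)
  have fin1: "finite {S. S \<subseteq> {1..n} \<and> S \<noteq> {}}"
    by (rule finite_subset[of _ "Pow {1..n}"]) auto
  let ?g = "\<lambda>S. (-1)^(card S - 1) * f (\<Sum>i\<in>S. A i)"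
  have "(\<Sum>S\<in>{S. S \<subseteq> {1..Suc n} \<and> S \<noteq> {}}. ?g S)
      = (\<Sum>S\<in>{S. S \<subseteq> {1..n} \<and> S \<noteq> {}}. ?g S) + (\<Sum>S\<in>insert (Suc n) ` Pow {1..n}. ?g S)"
    unfolding seteq by (rule sum.union_disjoint) (use fin1 disj in auto)
  also have "(\<Sum>S\<in>insert (Suc n) ` Pow {1..n}. ?g S) = (\<Sum>S\<in>Pow {1..n}. ?g (insert (Suc n) S))"
    by (rule sum.reindex[OF inj, unfolded comp_def])
  also have "\<dots> = Dd f (A (Suc n)) A n"
    unfolding Dd_def
  proof (rule sum.cong[OF refl])
    fix S assume S: "S \<in> Pow {1..n}"
    then have fin: "finite S" and nS: "Suc n \<notin> S" by (auto intro: finite_subset)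
    then show "?g (insert (Suc n) S) = (-1)^card S * f (A (Suc n) + (\<Sum>i\<in>S. A i))"
      by simp
  qed
  finally show ?thesis .
qed

theorem corollary4p6:
  fixes \<rho> :: real and n :: nat and A :: "nat \<Rightarrow> real^'n^'n"
  assumes "\<rho> \<in> {real k / 2 | k. k \<in> (UNIV :: nat set)} \<union> {(real CARD('n) - 1) / 2..}"
    and "n \<ge> 1"
    and "\<forall>i\<in>{1..n}. sym_pos_def_mat (A i)"
  shows "(\<Sum>S\<in>{S. S \<subseteq> {1..n} \<and> S \<noteq> {}}.
            (-1) ^ (card S - 1) * det (\<Sum>i\<in>S. A i) powr (-\<rho>)) \<ge> 0"
proof -
  define f :: "real^'n^'n \<Rightarrow> real" where "f Y = det Y powr (-\<rho>)" for Y
  have G: "\<rho> \<in> Gind (card (UNIV::'n set))" using assms(1) by (auto simp: Gind_def)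
  have CMd: "CM UNIV f"
    using main_CM[of "UNIV::'n set"] G by (simp add: detJ_UNIV f_def[abs_def])
  have pdA: "pdJ UNIV (A i)" if "i \<in> {1..n}" for i
    using assms(3) that spd_pd by blast
  have "n' \<le> n \<longrightarrow> 0 \<le> (\<Sum>S\<in>{S. S \<subseteq> {1..n'} \<and> S \<noteq> {}}. (-1) ^ (card S - 1) * f (\<Sum>i\<in>S. A i))" for n'
  proof (induction n')
    case 0
    then show ?case by simp
  next
    case (Suc m)
    show ?case
    proof
      assume le: "Suc m \<le> n"
      have X: "pdJ UNIV (A (Suc m))" using pdA le by simp
      have As: "\<forall>i\<in>{1..m}. psdJ UNIV (A i)" using le by (auto intro!: pd_psd pdA)
      have "0 \<le> Dd f (A (Suc m)) A m" using CMd X As unfolding CM_def by blast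
      then show "0 \<le> (\<Sum>S\<in>{S. S \<subseteq> {1..Suc m} \<and> S \<noteq> {}}. (-1) ^ (card S - 1) * f (\<Sum>i\<in>S. A i))"
        unfolding tele using Suc.IH le by simp
    qed
  qed
  then show ?thesis by (simp add: f_def)
qed

end
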